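(* Let $(X,\mathcal{T})$ be a finite topological space. Then the consistency radius $(\mathcal{S},a)\mapsto c_{\mathcal{S}}(a)$ is a continuous function $\mathbf{ShvPA}(X,\mathcal{T})\to\mathbb{R}$, where $\mathbf{ShvPA}(X,\mathcal{T})$ carries the topology described in the context.
   Context: A sheaf $\mathcal{S}$ of pseudometric spaces on a topological space $(X,\mathcal{T})$ is a sheaf of sets on $(X,\mathcal{T})$ together with a pseudometric $d_U$ on each $\mathcal{S}(U)$, $U\in\mathcal{T}$, such that every restriction map $\mathcal{S}(U\subseteq V):\mathcal{S}(V)\to\mathcal{S}(U)$ is continuous. An assignment to $\mathcal{S}$ is any element $a\in\prod_{U\in\mathcal{T}}\mathcal{S}(U)$ (no compatibility required). The assignment pseudometric is $D(a,b)=\sup_{U\in\mathcal{T}} d_U(a(U),b(U))$. The consistency radius of $a$ is $c_{\mathcal{S}}(a)=\sup_{U\subseteq V\in\mathcal{T}} d_U\big(\mathcal{S}(U\subseteq V)(a(V)),a(U)\big)$. The objects of $\mathbf{ShvPA}(X,\mathcal{T})$ are pairs $(\mathcal{S},a)$ with $\mathcal{S}$ a sheaf of pseudometric spaces on $(X,\mathcal{T})$ and $a$ an assignment to $\mathcal{S}$. This set is topologized as follows. Partition the pairs according to the isomorphism class of the underlying sheaf. In one class, fix a representative $\mathcal{S}$; every sheaf $\mathcal{R}$ in the class is regarded (via the isomorphism) as having the same stalks $\mathcal{S}(U)$ but possibly different restriction maps $\mathcal{R}(U\subseteq V)\in C(\mathcal{S}(V),\mathcal{S}(U))$, and its assignments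 as elements of $\prod_{U\in\mathcal{T}}\mathcal{S}(U)$. Thus the class is identified with a subset of $\prod_{U\subseteq V\in\mathcal{T}} C(\mathcal{S}(V),\mathcal{S}(U))\times\prod_{U\in\mathcal{T}}\mathcal{S}(U)$ and given the subspace topology, where each $C(\mathcal{S}(V),\mathcal{S}(U))$ carries the topology of uniform convergence (pseudometric $(f,g)\mapsto\sup_{x}d_U(f(x),g(x))$) and $\prod_{U}\mathcal{S}(U)$ carries the topology of the assignment pseudometric. $\mathbf{ShvPA}(X,\mathcal{T})$ is the disjoint union of these classes. *)

theory Defs
  imports "HOL-Analysis.Analysis"
begin

text \<open>Stalks of all open sets are represented as subsets of one ambient type 'a.
  Restriction maps are indexed by pairs (U,V) with U \<subseteq> V open.\<close>

definition pseudometric_on :: "'a set \<Rightarrow> ('a \<Rightarrow> 'a \<Rightarrow> real) \<Rightarrow> bool" where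
  "pseudometric_on A d \<longleftrightarrow>
     (\<forall>x\<in>A. d x x = 0) \<and>
     (\<forall>x\<in>A. \<forall>y\<in>A. 0 \<le> d x y \<and> d x y = d y x) \<and>
     (\<forall>x\<in>A. \<forall>y\<in>A. \<forall>z\<in>A. d x z \<le> d x y + d y z)"

definition pm_continuous ::
  "'a set \<Rightarrow> ('a \<Rightarrow> 'a \<Rightarrow> real) \<Rightarrow> ('b \<Rightarrow> 'b \<Rightarrow> real) \<Rightarrow> ('a \<Rightarrow> 'b) \<Rightarrow> bool" where
  "pm_continuous A dA dB f \<longleftrightarrow>
     (\<forall>x\<in>A. \<forall>e>0. \<exists>\<delta>>0. \<forall>y\<in>A. dA x y < \<delta> \<longrightarrow> dB (f x) (f y) < e)"

definition Incl :: "'x topology \<Rightarrow> ('x set \<times> 'x set) set" where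
  "Incl T = {(U, V). openin T U \<and> openin T V \<and> U \<subseteq> V}"

definition presheaf_on ::
  "'x topology \<Rightarrow> ('x set \<Rightarrow> 'a set) \<Rightarrow> ('x set \<times> 'x set \<Rightarrow> 'a \<Rightarrow> 'a) \<Rightarrow> bool" where
  "presheaf_on T stalk R \<longleftrightarrow>
     (\<forall>(U, V)\<in>Incl T. R (U, V) \<in> stalk V \<rightarrow> stalk U) \<and>
     (\<forall>U. openin T U \<longrightarrow> (\<forall>x\<in>stalk U. R (U, U) x = x)) \<and>
     (\<forall>U V W. openin T U \<and> openin T V \<and> openin T W \<and> U \<subseteq> V \<and> V \<subseteq> W \<longrightarrow>
        (\<forall>x\<in>stalk W. R (U, V) (R (V, W) x) = R (U, W) x))"

definition sheaf_on ::
  "'x topology \<Rightarrow> ('x set \<Rightarrow> 'a set) \<Rightarrow> ('x set \<times> 'x set \<Rightarrow> 'a \<Rightarrow> 'a) \<Rightarrow> bool" where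
  "sheaf_on T stalk R \<longleftrightarrow> presheaf_on T stalk R \<and>
     (\<forall>U \<U>. openin T U \<and> (\<forall>V\<in>\<U>. openin T V) \<and> \<Union>\<U> = U \<longrightarrow>
        (\<forall>s\<in>stalk U. \<forall>t\<in>stalk U. (\<forall>V\<in>\<U>. R (V, U) s = R (V, U) t) \<longrightarrow> s = t) \<and>
        (\<forall>f. (\<forall>V\<in>\<U>. f V \<in> stalk V) \<and>
              (\<forall>V\<in>\<U>. \<forall>W\<in>\<U>. R (V \<inter> W, V) (f V) = R (V \<inter> W, W) (f W)) \<longrightarrow>
              (\<exists>s\<in>stalk U. \<forall>V\<in>\<U>. R (V, U) s = f V)))"

definition sheaf_pm ::
  "'x topology \<Rightarrow> ('x set \<Rightarrow> 'a set) \<Rightarrow> ('x set \<Rightarrow> 'a \<Rightarrow> 'a \<Rightarrow> real)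
     \<Rightarrow> ('x set \<times> 'x set \<Rightarrow> 'a \<Rightarrow> 'a) \<Rightarrow> bool" where
  "sheaf_pm T stalk d R \<longleftrightarrow> sheaf_on T stalk R \<and>
     (\<forall>U. openin T U \<longrightarrow> pseudometric_on (stalk U) (d U)) \<and>
     (\<forall>(U, V)\<in>Incl T. pm_continuous (stalk V) (d V) (d U) (R (U, V)))"

definition consistency_radius ::
  "'x topology \<Rightarrow> ('x set \<Rightarrow> 'a \<Rightarrow> 'a \<Rightarrow> real) \<Rightarrow> ('x set \<times> 'x set \<Rightarrow> 'a \<Rightarrow> 'a)
     \<Rightarrow> ('x set \<Rightarrow> 'a) \<Rightarrow> real" where
  "consistency_radius T d R a =
     (SUP p\<in>Incl T. d (fst p) (R p (a (snd p))) (a (fst p)))"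

definition pm_topology :: "'b set \<Rightarrow> ('b \<Rightarrow> 'b \<Rightarrow> ereal) \<Rightarrow> 'b topology" where
  "pm_topology A D = topology (\<lambda>S. S \<subseteq> A \<and>
      (\<forall>x\<in>S. \<exists>e>0. \<forall>y\<in>A. D x y < ereal e \<longrightarrow> y \<in> S))"

definition unif_dist :: "'a set \<Rightarrow> ('b \<Rightarrow> 'b \<Rightarrow> real) \<Rightarrow> ('a \<Rightarrow> 'b) \<Rightarrow> ('a \<Rightarrow> 'b) \<Rightarrow> ereal" where
  "unif_dist A dB f g = (SUP x\<in>A. ereal (dB (f x) (g x)))"

definition assign_dist ::
  "'x topology \<Rightarrow> ('x set \<Rightarrow> 'a \<Rightarrow> 'a \<Rightarrow> real) \<Rightarrow> ('x set \<Rightarrow> 'a) \<Rightarrow> ('x set \<Rightarrow> 'a) \<Rightarrow> ereal" where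
  "assign_dist T d a b = (SUP U\<in>{U. openin T U}. ereal (d U (a U) (b U)))"

definition Cont ::
  "('x set \<Rightarrow> 'a set) \<Rightarrow> ('x set \<Rightarrow> 'a \<Rightarrow> 'a \<Rightarrow> real) \<Rightarrow> 'x set \<times> 'x set \<Rightarrow> ('a \<Rightarrow> 'a) set" where
  "Cont stalk d p = {f \<in> extensional (stalk (snd p)).
      f \<in> stalk (snd p) \<rightarrow> stalk (fst p) \<and>
      pm_continuous (stalk (snd p)) (d (snd p)) (d (fst p)) f}"

definition unif_top ::
  "('x set \<Rightarrow> 'a set) \<Rightarrow> ('x set \<Rightarrow> 'a \<Rightarrow> 'a \<Rightarrow> real) \<Rightarrow> 'x set \<times> 'x set \<Rightarrow> ('a \<Rightarrow> 'a) topology" where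
  "unif_top stalk d p = pm_topology (Cont stalk d p) (unif_dist (stalk (snd p)) (d (fst p)))"

definition assign_top ::
  "'x topology \<Rightarrow> ('x set \<Rightarrow> 'a set) \<Rightarrow> ('x set \<Rightarrow> 'a \<Rightarrow> 'a \<Rightarrow> real) \<Rightarrow> ('x set \<Rightarrow> 'a) topology" where
  "assign_top T stalk d = pm_topology (Pi\<^sub>E {U. openin T U} stalk) (assign_dist T d)"

text \<open>The ambient space  prod_{U \<subseteq> V} C(S(V),S(U)) \<times> prod_U S(U).\<close>
definition ShvPA_top ::
  "'x topology \<Rightarrow> ('x set \<Rightarrow> 'a set) \<Rightarrow> ('x set \<Rightarrow> 'a \<Rightarrow> 'a \<Rightarrow> real)
     \<Rightarrow> ((('x set \<times> 'x set) \<Rightarrow> 'a \<Rightarrow> 'a) \<times> ('x set \<Rightarrow> 'a)) topology" where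
  "ShvPA_top T stalk d =
     prod_topology (product_topology (unif_top stalk d) (Incl T)) (assign_top T stalk d)"

definition sheaf_iso ::
  "'x topology \<Rightarrow> ('x set \<Rightarrow> 'a set) \<Rightarrow> ('x set \<times> 'x set \<Rightarrow> 'a \<Rightarrow> 'a)
     \<Rightarrow> ('x set \<times> 'x set \<Rightarrow> 'a \<Rightarrow> 'a) \<Rightarrow> bool" where
  "sheaf_iso T stalk R S \<longleftrightarrow> (\<exists>\<phi>.
     (\<forall>U. openin T U \<longrightarrow> bij_betw (\<phi> U) (stalk U) (stalk U)) \<and>
     (\<forall>(U, V)\<in>Incl T. \<forall>x\<in>stalk V. \<phi> U (S (U, V) x) = R (U, V) (\<phi> V x)))"

text \<open>The component of ShvPA(X,T) of the isomorphism class of S, as a subset of the ambient space.\<close>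
definition ShvPA_class ::
  "'x topology \<Rightarrow> ('x set \<Rightarrow> 'a set) \<Rightarrow> ('x set \<Rightarrow> 'a \<Rightarrow> 'a \<Rightarrow> real)
     \<Rightarrow> ('x set \<times> 'x set \<Rightarrow> 'a \<Rightarrow> 'a)
     \<Rightarrow> ((('x set \<times> 'x set) \<Rightarrow> 'a \<Rightarrow> 'a) \<times> ('x set \<Rightarrow> 'a)) set" where
  "ShvPA_class T stalk d S = {(R, a) \<in> topspace (ShvPA_top T stalk d).
      sheaf_pm T stalk d R \<and> sheaf_iso T stalk R S}"

end

theory Submission imports Defs begin

lemma istop_pm: "istopology (\<lambda>S. S \<subseteq> A \<and> (\<forall>x\<in>S. \<exists>e>0. \<forall>y\<in>A. D x y < ereal e \<longrightarrow> y \<in> S))"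
  unfolding istopology_def
proof (rule conjI; intro allI impI)
  fix S T assume S: "S \<subseteq> A \<and> (\<forall>x\<in>S. \<exists>e>0. \<forall>y\<in>A. D x y < ereal e \<longrightarrow> y \<in> S)"
    and T: "T \<subseteq> A \<and> (\<forall>x\<in>T. \<exists>e>0. \<forall>y\<in>A. D x y < ereal e \<longrightarrow> y \<in> T)"
  show "S \<inter> T \<subseteq> A \<and> (\<forall>x\<in>S \<inter> T. \<exists>e>0. \<forall>y\<in>A. D x y < ereal e \<longrightarrow> y \<in> S \<inter> T)"
  proof (intro conjI ballI)
    show "S \<inter> T \<subseteq> A" using S by blast
  next
    fix x assume x: "x \<in> S \<inter> T"
    have xS: "x \<in> S" and xT: "x \<in> T" using x by auto
    obtain e1 where e1: "e1 > 0" "\<forall>y\<in>A. D x y < ereal e1 \<longrightarrow> y \<in> S"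
      using S xS by meson
    obtain e2 where e2: "e2 > 0" "\<forall>y\<in>A. D x y < ereal e2 \<longrightarrow> y \<in> T"
      using T xT by meson
    show "\<exists>e>0. \<forall>y\<in>A. D x y < ereal e \<longrightarrow> y \<in> S \<inter> T"
    proof (rule exI[of _ "min e1 e2"], intro conjI ballI impI)
      show "min e1 e2 > 0" using e1 e2 by simp
      fix y assume "y \<in> A" "D x y < ereal (min e1 e2)"
      moreover have "ereal (min e1 e2) \<le> ereal e1" "ereal (min e1 e2) \<le> ereal e2" by auto
      ultimately have "D x y < ereal e1" "D x y < ereal e2" by (meson order_less_le_trans)+
      then show "y \<in> S \<inter> T" using e1 e2 \<open>y \<in> A\<close> by blast
    qed
  qed
next
  fix K assume K: "\<forall>S\<in>K. S \<subseteq> A \<and> (\<forall>x\<in>S. \<exists>e>0. \<forall>y\<in>A. D x y < ereal e \<longrightarrow> y \<in> S)"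
  show "\<Union>K \<subseteq> A \<and> (\<forall>x\<in>\<Union>K. \<exists>e>0. \<forall>y\<in>A. D x y < ereal e \<longrightarrow> y \<in> \<Union>K)"
  proof (intro conjI ballI)
    show "\<Union>K \<subseteq> A" using K by blast
  next
    fix x assume "x \<in> \<Union>K"
    then obtain S where S: "S \<in> K" "x \<in> S" by blast
    then obtain e where e: "e > 0" "\<forall>y\<in>A. D x y < ereal e \<longrightarrow> y \<in> S" using K by meson
    show "\<exists>e>0. \<forall>y\<in>A. D x y < ereal e \<longrightarrow> y \<in> \<Union>K"
      using e S by blast
  qed
qed

lemma openin_pm: "openin (pm_topology A D) S \<longleftrightarrow> S \<subseteq> A \<and> (\<forall>x\<in>S. \<exists>e>0. \<forall>y\<in>A. D x y < ereal e \<longrightarrow> y \<in> S)"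
  unfolding pm_topology_def by (simp add: istop_pm)

lemma topspace_pm[simp]: "topspace (pm_topology A D) = A"
proof -
  have "openin (pm_topology A D) A" unfolding openin_pm by (auto intro: exI[of _ 1])
  show ?thesis
  proof
    show "topspace (pm_topology A D) \<subseteq> A" unfolding topspace_def openin_pm by blast
    show "A \<subseteq> topspace (pm_topology A D)" using \<open>openin (pm_topology A D) A\<close> openin_subset by blast
  qed
qed

lemma ball_open_pm:
  assumes tri: "\<forall>x\<in>A. \<forall>y\<in>A. \<forall>z\<in>A. D x z \<le> D x y + D y z" and x: "x \<in> A"
  shows "openin (pm_topology A D) {y\<in>A. D x y < ereal r}"
  unfolding openin_pm
proof (intro conjI ballI)
  fix y assume y: "y \<in> {y\<in>A. D x y < ereal r}"
  show "\<exists>e>0. \<forall>z\<in>A. D y z < ereal e \<longrightarrow> z \<in> {y \<in> A. D x y < ereal r}"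
  proof (cases "D x y")
    case (real v)
    with y have "v < r" by auto
    show ?thesis
    proof (rule exI[of _ "r - v"], intro conjI ballI impI)
      show "r - v > 0" using \<open>v < r\<close> by simp
      fix z assume z: "z \<in> A" "D y z < ereal (r - v)"
      have "D x z \<le> D x y + D y z" using tri x y z by blast
      also have "\<dots> < ereal r" using z(2) real by (cases "D y z") auto
      finally show "z \<in> {y \<in> A. D x y < ereal r}" using z by simp
    qed
  next
    case PInf with y show ?thesis by simp
  next
    case MInf
    show ?thesis
    proof (rule exI[of _ 1], intro conjI ballI impI)
      fix z assume z: "z \<in> A" "D y z < ereal 1"
      have "D x z \<le> D x y + D y z" using tri x y z by blast
      also have "\<dots> < ereal r" using z(2) MInf by (cases "D y z") auto
      finally show "z \<in> {y \<in> A. D x y < ereal r}" using z by simp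
    qed simp
  qed
qed auto

lemma fin_sup_close:
  fixes f g :: "'i \<Rightarrow> real"
  assumes "finite I" "I \<noteq> {}" "\<forall>i\<in>I. \<bar>f i - g i\<bar> < e"
  shows "\<bar>(SUP i\<in>I. f i) - (SUP i\<in>I. g i)\<bar> < e"
proof -
  have att: "\<exists>i\<in>I. (SUP i\<in>I. h i) = h i" for h :: "'i \<Rightarrow> real"
  proof -
    have "(SUP i\<in>I. h i) = Max (h ` I)" using assms cSup_eq_Max[of "h ` I"] by auto
    moreover have "Max (h ` I) \<in> h ` I" using assms by (intro Max_in) auto
    ultimately show ?thesis by auto
  qed
  have ub: "h i \<le> (SUP i\<in>I. h i)" if "i \<in> I" for h :: "'i \<Rightarrow> real" and i
    using that assms(1) by (intro cSUP_upper) auto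
  obtain i where i: "i \<in> I" "(SUP i\<in>I. f i) = f i" using att by blast
  obtain j where j: "j \<in> I" "(SUP i\<in>I. g i) = g j" using att by blast
  have "g i \<le> (SUP i\<in>I. g i)" "f j \<le> (SUP i\<in>I. f i)" using ub[OF i(1), of g] ub[OF j(1), of f] i j by auto
  moreover have "\<bar>f i - g i\<bar> < e" "\<bar>f j - g j\<bar> < e" using assms(3) i(1) j(1) by auto
  ultimately show ?thesis using i(2) j(2) by linarith
qed

lemma fin_delta:
  assumes "finite I" "\<forall>i\<in>I. \<exists>\<delta>>0. P i (\<delta>::real)"
    and mono: "\<And>i \<delta> \<delta>'. P i \<delta> \<Longrightarrow> 0 < \<delta>' \<Longrightarrow> \<delta>' \<le> \<delta> \<Longrightarrow> P i \<delta>'"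
  shows "\<exists>\<delta>>0. \<forall>i\<in>I. P i \<delta>"
  using assms(1,2)
proof (induction I rule: finite_induct)
  case empty then show ?case by (auto intro: exI[of _ 1])
next
  case (insert j F)
  then obtain \<delta>1 where d1: "\<delta>1 > 0" "\<forall>i\<in>F. P i \<delta>1" by auto
  obtain \<delta>2 where d2: "\<delta>2 > 0" "P j \<delta>2" using insert.prems by auto
  show ?case
    by (rule exI[of _ "min \<delta>1 \<delta>2"]) (use d1 d2 mono in auto)
qed


lemma pm_tri:
  assumes "pseudometric_on A d" "x \<in> A" "y \<in> A" "z \<in> A"
  shows "d x z \<le> d x y + d y z" "d x y = d y x" "d x x = 0"
  using assms unfolding pseudometric_on_def by blast+

lemma value_close:
  assumes pm: "pseudometric_on A d" and in_A: "x0 \<in> A" "x1 \<in> A" "y0 \<in> A" "y1 \<in> A" "m \<in> A"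
    and h2: "d x0 m < e/3" and h3: "d m x1 < e/3" and h4: "d y0 y1 < e/3"
  shows "\<bar>d x1 y1 - d x0 y0\<bar> < e"
proof -
  have a: "d x1 y1 \<le> d x1 x0 + d x0 y1" "d x0 y1 \<le> d x0 y0 + d y0 y1"
    "d x0 y0 \<le> d x0 x1 + d x1 y0" "d x1 y0 \<le> d x1 y1 + d y1 y0"
    "d x0 x1 \<le> d x0 m + d m x1"
    "d x1 x0 = d x0 x1" "d y1 y0 = d y0 y1"
    using pm_tri[OF pm] in_A by meson+
  then show ?thesis using h2 h3 h4 by linarith
qed

lemma unif_tri:
  assumes pm: "pseudometric_on (stalk (fst p)) (d (fst p))"
  shows "\<forall>f\<in>Cont stalk d p. \<forall>g\<in>Cont stalk d p. \<forall>h\<in>Cont stalk d p.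
    unif_dist (stalk (snd p)) (d (fst p)) f h \<le> unif_dist (stalk (snd p)) (d (fst p)) f g + unif_dist (stalk (snd p)) (d (fst p)) g h"
proof (intro ballI)
  fix f g h assume f: "f \<in> Cont stalk d p" and g: "g \<in> Cont stalk d p" and h: "h \<in> Cont stalk d p"
  show "unif_dist (stalk (snd p)) (d (fst p)) f h \<le> unif_dist (stalk (snd p)) (d (fst p)) f g + unif_dist (stalk (snd p)) (d (fst p)) g h"
    unfolding unif_dist_def
  proof (rule SUP_least)
    fix x assume x: "x \<in> stalk (snd p)"
    have fx: "f x \<in> stalk (fst p)" "g x \<in> stalk (fst p)" "h x \<in> stalk (fst p)"
      using f g h x unfolding Cont_def by auto
    have "ereal (d (fst p) (f x) (h x)) \<le> ereal (d (fst p) (f x) (g x)) + ereal (d (fst p) (g x) (h x))"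
      using pm_tri(1)[OF pm fx(1) fx(2) fx(3)] by simp
    also have "\<dots> \<le> (SUP x\<in>stalk (snd p). ereal (d (fst p) (f x) (g x))) + (SUP x\<in>stalk (snd p). ereal (d (fst p) (g x) (h x)))"
      by (intro add_mono SUP_upper x)
    finally show "ereal (d (fst p) (f x) (h x)) \<le> \<dots>" .
  qed
qed

lemma assign_tri:
  assumes pm: "\<forall>U. openin T U \<longrightarrow> pseudometric_on (stalk U) (d U)"
  shows "\<forall>a\<in>Pi\<^sub>E {U. openin T U} stalk. \<forall>b\<in>Pi\<^sub>E {U. openin T U} stalk. \<forall>c\<in>Pi\<^sub>E {U. openin T U} stalk.
    assign_dist T d a c \<le> assign_dist T d a b + assign_dist T d b c"
proof (intro ballI)
  fix a b c assume a: "a \<in> Pi\<^sub>E {U. openin T U} stalk" and b: "b \<in> Pi\<^sub>E {U. openin T U} stalk"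
    and c: "c \<in> Pi\<^sub>E {U. openin T U} stalk"
  show "assign_dist T d a c \<le> assign_dist T d a b + assign_dist T d b c"
    unfolding assign_dist_def
  proof (rule SUP_least)
    fix U assume U: "U \<in> {U. openin T U}"
    have fx: "a U \<in> stalk U" "b U \<in> stalk U" "c U \<in> stalk U"
      using a b c U by auto
    have pmU: "pseudometric_on (stalk U) (d U)" using pm U by auto
    have "ereal (d U (a U) (c U)) \<le> ereal (d U (a U) (b U)) + ereal (d U (b U) (c U))"
      using pm_tri(1)[OF pmU fx(1) fx(2) fx(3)] by simp
    also have "\<dots> \<le> (SUP U\<in>{U. openin T U}. ereal (d U (a U) (b U))) + (SUP U\<in>{U. openin T U}. ereal (d U (b U) (c U)))"
      by (intro add_mono SUP_upper U)
    finally show "ereal (d U (a U) (c U)) \<le> \<dots>" .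
  qed
qed


lemma finite_Incl: "finite (topspace T) \<Longrightarrow> finite (Incl T)"
proof -
  assume f: "finite (topspace T)"
  have "Incl T \<subseteq> Pow (topspace T) \<times> Pow (topspace T)"
    unfolding Incl_def using openin_subset by fastforce
  then show ?thesis using f by (meson finite_Pow_iff finite_SigmaI finite_subset)
qed

lemma key:
  assumes fin: "finite (topspace T)"
    and pmS: "\<forall>U. openin T U \<longrightarrow> pseudometric_on (stalk U) (d U)"
    and R: "R \<in> Pi\<^sub>E (Incl T) (Cont stalk d)" and a: "a \<in> Pi\<^sub>E {U. openin T U} stalk"
    and e: "e > 0"
  shows "\<exists>N. openin (ShvPA_top T stalk d) N \<and> (R, a) \<in> N \<and>
     (\<forall>R' a'. (R', a') \<in> N \<longrightarrow> \<bar>consistency_radius T d R' a' - consistency_radius T d R a\<bar> < e)"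
proof -
  have finI: "finite (Incl T)" using fin finite_Incl by blast
  define P where "P p \<delta> \<longleftrightarrow> \<delta> \<le> e/3 \<and> (\<forall>y\<in>stalk (snd p). d (snd p) (a (snd p)) y < \<delta> \<longrightarrow>
      d (fst p) (R p (a (snd p))) (R p y) < e/3)" for p \<delta>
  have e3: "e/3 > 0" using e by simp
  have ex: "\<forall>p\<in>Incl T. \<exists>\<delta>>0. P p \<delta>"
  proof
    fix p assume p: "p \<in> Incl T"
    then have "R p \<in> Cont stalk d p" using R by auto
    then have pc: "pm_continuous (stalk (snd p)) (d (snd p)) (d (fst p)) (R p)" unfolding Cont_def by auto
    have aV: "a (snd p) \<in> stalk (snd p)" using a p unfolding Incl_def by auto
    obtain \<delta> where \<delta>: "\<delta> > 0" "\<forall>y\<in>stalk (snd p). d (snd p) (a (snd p)) y < \<delta> \<longrightarrow>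
      d (fst p) (R p (a (snd p))) (R p y) < e/3"
      using pc[unfolded pm_continuous_def, rule_format, OF aV e3] by blast
    have "P p (min \<delta> (e/3))" unfolding P_def using \<delta> by auto
    moreover have "min \<delta> (e/3) > 0" using \<delta> e3 by simp
    ultimately show "\<exists>\<delta>>0. P p \<delta>" by blast
  qed
  have mono: "P p \<delta>'" if "P p \<delta>" "0 < \<delta>'" "\<delta>' \<le> \<delta>" for p \<delta> \<delta>'
  proof -
    have "\<delta>' \<le> e/3" using that unfolding P_def by linarith
    moreover have "\<forall>y\<in>stalk (snd p). d (snd p) (a (snd p)) y < \<delta>' \<longrightarrow> d (fst p) (R p (a (snd p))) (R p y) < e/3"
    proof (intro ballI impI)
      fix y assume y: "y \<in> stalk (snd p)" "d (snd p) (a (snd p)) y < \<delta>'"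
      then have "d (snd p) (a (snd p)) y < \<delta>" using that(3) by linarith
      then show "d (fst p) (R p (a (snd p))) (R p y) < e/3" using that(1) y(1) unfolding P_def by blast
    qed
    ultimately show ?thesis unfolding P_def by blast
  qed
  have "\<exists>\<delta>>0. \<forall>p\<in>Incl T. P p \<delta>"
    by (rule fin_delta[where P=P, OF finI ex mono])
  then obtain \<delta> where \<delta>0: "\<delta> > 0" and \<delta>P: "\<forall>p\<in>Incl T. P p \<delta>"
    by blast
  have \<delta>: "\<delta> > 0" "\<forall>p\<in>Incl T. \<delta> \<le> e/3 \<and> (\<forall>y\<in>stalk (snd p). d (snd p) (a (snd p)) y < \<delta> \<longrightarrow>
      d (fst p) (R p (a (snd p))) (R p y) < e/3)"
    using \<delta>0 \<delta>P unfolding P_def by auto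
  define B where "B p = (if p \<in> Incl T then {f \<in> Cont stalk d p. unif_dist (stalk (snd p)) (d (fst p)) (R p) f < ereal (e/3)}
      else topspace (unif_top stalk d p))" for p
  define Ab where "Ab = {b \<in> Pi\<^sub>E {U. openin T U} stalk. assign_dist T d a b < ereal \<delta>}"
  define N where "N = Pi\<^sub>E (Incl T) B \<times> Ab"
  have pmp: "pseudometric_on (stalk (fst p)) (d (fst p))" if "p \<in> Incl T" for p
    using pmS that unfolding Incl_def by auto
  have openB: "openin (unif_top stalk d p) (B p)" for p
  proof (cases "p \<in> Incl T")
    case True
    then show ?thesis unfolding B_def unif_top_def using R
      by (auto intro!: ball_open_pm unif_tri pmp)
  qed (simp add: B_def)
  have "openin (product_topology (unif_top stalk d) (Incl T)) (Pi\<^sub>E (Incl T) B)"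
    by (rule product_topology_basis[OF openB]) (rule finite_subset[OF _ finI], auto simp: B_def)
  moreover have "openin (assign_top T stalk d) Ab"
    unfolding Ab_def assign_top_def using a by (intro ball_open_pm assign_tri pmS)
  ultimately have openN: "openin (ShvPA_top T stalk d) N"
    unfolding N_def ShvPA_top_def by (simp add: openin_prod_Times_iff)
  have RB: "R \<in> Pi\<^sub>E (Incl T) B"
  proof -
    have "R p \<in> B p" if p: "p \<in> Incl T" for p
    proof -
      have Rp: "R p \<in> Cont stalk d p" using R p by auto
      have "unif_dist (stalk (snd p)) (d (fst p)) (R p) (R p) \<le> 0"
        unfolding unif_dist_def
      proof (rule SUP_least)
        fix x assume "x \<in> stalk (snd p)"
        then have Rx: "R p x \<in> stalk (fst p)" using Rp unfolding Cont_def by auto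
        show "ereal (d (fst p) (R p x) (R p x)) \<le> 0" using pm_tri(3)[OF pmp[OF p] Rx Rx Rx] by simp
      qed
      also have "\<dots> < ereal (e/3)" using e by simp
      finally show ?thesis using Rp p unfolding B_def by simp
    qed
    then show ?thesis using R by auto
  qed
  have aA: "a \<in> Ab"
  proof -
    have "assign_dist T d a a \<le> 0"
      unfolding assign_dist_def
    proof (rule SUP_least)
      fix U assume U: "U \<in> {U. openin T U}"
      then have "a U \<in> stalk U" using a by auto
      moreover have "pseudometric_on (stalk U) (d U)" using pmS U by simp
      ultimately show "ereal (d U (a U) (a U)) \<le> 0" using pm_tri(3) by fastforce
    qed
    also have "\<dots> < ereal \<delta>" using \<delta> by simp
    finally show ?thesis using a unfolding Ab_def by simp
  qed
  have est: "\<bar>consistency_radius T d R' a' - consistency_radius T d R a\<bar> < e" if N: "(R', a') \<in> N" for R' a'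
    unfolding consistency_radius_def
  proof (rule fin_sup_close[OF finI], force simp: Incl_def, intro ballI)
    fix p assume p: "p \<in> Incl T"
    obtain U V where pUV: "p = (U, V)" by fastforce
    have UV: "openin T U" "openin T V" "U \<subseteq> V" using p pUV unfolding Incl_def by auto
    have R'p: "R' p \<in> B p" and a': "a' \<in> Ab" using N p unfolding N_def by auto
    have R'c: "R' p \<in> Cont stalk d p" and ud: "unif_dist (stalk V) (d U) (R p) (R' p) < ereal (e/3)"
      using R'p p pUV unfolding B_def by auto
    have ad: "assign_dist T d a a' < ereal \<delta>" and a'P: "a' \<in> Pi\<^sub>E {U. openin T U} stalk"
      using a' unfolding Ab_def by auto
    have Rc: "R p \<in> Cont stalk d p" using R p by auto
    have st: "a V \<in> stalk V" "a U \<in> stalk U" "a' V \<in> stalk V" "a' U \<in> stalk U"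
      using a a'P UV by auto
    have st2: "R p (a V) \<in> stalk U" "R p (a' V) \<in> stalk U" "R' p (a' V) \<in> stalk U"
      using Rc R'c st pUV unfolding Cont_def by auto
    have "ereal (d V (a V) (a' V)) \<le> assign_dist T d a a'"
      unfolding assign_dist_def using UV by (intro SUP_upper) auto
    then have "ereal (d V (a V) (a' V)) < ereal \<delta>" using ad by (rule order.strict_trans1)
    then have h1: "d V (a V) (a' V) < \<delta>" by simp
    have "ereal (d U (a U) (a' U)) \<le> assign_dist T d a a'"
      unfolding assign_dist_def using UV by (intro SUP_upper) auto
    then have "ereal (d U (a U) (a' U)) < ereal \<delta>" using ad by (rule order.strict_trans1)
    then have "d U (a U) (a' U) < \<delta>" by simp
    then have h4: "d U (a U) (a' U) < e/3" using \<delta> p by force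
    have h2: "d U (R p (a V)) (R p (a' V)) < e/3" using \<delta>(2) p pUV h1 st by auto
    have "ereal (d U (R p (a' V)) (R' p (a' V))) \<le> unif_dist (stalk V) (d U) (R p) (R' p)"
      unfolding unif_dist_def using st by (intro SUP_upper) auto
    then have "ereal (d U (R p (a' V)) (R' p (a' V))) < ereal (e/3)" using ud by (rule order.strict_trans1)
    then have h3: "d U (R p (a' V)) (R' p (a' V)) < e/3" by simp
    have "\<bar>d U (R' p (a' V)) (a' U) - d U (R p (a V)) (a U)\<bar> < e"
    proof (rule value_close[of "stalk U" "d U" "R p (a V)" "R' p (a' V)" "a U" "a' U" "R p (a' V)" e])
      show "pseudometric_on (stalk U) (d U)" using pmS UV by simp
    qed (use st st2 h2 h3 h4 in auto)
    then show "\<bar>d (fst p) (R' p (a' (snd p))) (a' (fst p)) - d (fst p) (R p (a (snd p))) (a (fst p))\<bar> < e"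
      using pUV by simp
  qed
  show ?thesis using openN RB aA est unfolding N_def by blast
qed

theorem theorem21:
  fixes T :: "'x topology"
    and stalk :: "'x set \<Rightarrow> 'a set"
    and d :: "'x set \<Rightarrow> 'a \<Rightarrow> 'a \<Rightarrow> real"
    and S :: "'x set \<times> 'x set \<Rightarrow> 'a \<Rightarrow> 'a"
  assumes "finite (topspace T)"
    and "sheaf_pm T stalk d S"
  shows "continuous_map (subtopology (ShvPA_top T stalk d) (ShvPA_class T stalk d S))
           euclideanreal (\<lambda>(R, a). consistency_radius T d R a)"
proof -
  let ?X = "ShvPA_top T stalk d" and ?C = "ShvPA_class T stalk d S"
  let ?f = "\<lambda>(R, a). consistency_radius T d R a"
  have pmS: "\<forall>U. openin T U \<longrightarrow> pseudometric_on (stalk U) (d U)"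
    using assms(2) unfolding sheaf_pm_def by (rule conjunct1[OF conjunct2])
  have tsX: "topspace ?X = Pi\<^sub>E (Incl T) (Cont stalk d) \<times> Pi\<^sub>E {U. openin T U} stalk"
    unfolding ShvPA_top_def unif_top_def assign_top_def by simp
  show ?thesis
    unfolding continuous_map_def
  proof (intro conjI allI impI)
    fix W :: "real set" assume "openin euclideanreal W"
    then have W: "open W" by simp
    show "openin (subtopology ?X ?C) {x \<in> topspace (subtopology ?X ?C). ?f x \<in> W}"
    proof (subst openin_subopen, intro ballI)
      fix z assume z: "z \<in> {x \<in> topspace (subtopology ?X ?C). ?f x \<in> W}"
      obtain R a where zRa: "z = (R, a)" by fastforce
      have zX: "(R, a) \<in> topspace ?X" and zC: "(R, a) \<in> ?C" and fW: "consistency_radius T d R a \<in> W"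
        using z zRa by auto
      obtain e where e: "e > 0" "\<forall>y. dist y (consistency_radius T d R a) < e \<longrightarrow> y \<in> W"
        using W fW unfolding open_dist by blast
      have Rin: "R \<in> Pi\<^sub>E (Incl T) (Cont stalk d)" and ain: "a \<in> Pi\<^sub>E {U. openin T U} stalk"
        using zX unfolding tsX by blast+
      obtain N where N: "openin ?X N" "(R, a) \<in> N"
        "\<forall>R' a'. (R', a') \<in> N \<longrightarrow> \<bar>consistency_radius T d R' a' - consistency_radius T d R a\<bar> < e"
        using key[OF assms(1) pmS Rin ain e(1)] by blast
      show "\<exists>T'. openin (subtopology ?X ?C) T' \<and> z \<in> T' \<and> T' \<subseteq> {x \<in> topspace (subtopology ?X ?C). ?f x \<in> W}"
      proof (intro exI conjI)
        show "openin (subtopology ?X ?C) (?C \<inter> N)" using N(1) by (rule openin_subtopology_Int2)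
        show "z \<in> ?C \<inter> N" using zC N(2) zRa by simp
        show "?C \<inter> N \<subseteq> {x \<in> topspace (subtopology ?X ?C). ?f x \<in> W}"
        proof
          fix y assume y: "y \<in> ?C \<inter> N"
          obtain R' a' where yRa: "y = (R', a')" by fastforce
          have tX: "y \<in> topspace ?X" using y N(1) openin_subset by blast
          have "\<bar>consistency_radius T d R' a' - consistency_radius T d R a\<bar> < e"
            using N(3) y yRa by blast
          then have "consistency_radius T d R' a' \<in> W" using e(2) by (simp add: dist_real_def)
          then have "?f y \<in> W" using yRa by simp
          then show "y \<in> {x \<in> topspace (subtopology ?X ?C). ?f x \<in> W}" using y tX by simp
        qed
      qed
    qed
  qed simp
qed

end
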